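(* For every subset $A \subseteq \overline{\mathbb{Q}}$ there is a transcendental entire function $f$ such that $S_{f^{(s)}} = A$ for every integer $s \geq 0$.
   Context: $\overline{\mathbb{Q}}$ denotes the set of algebraic numbers in $\mathbb{C}$. For an entire function $g$, its exceptional set is $S_g = \{\alpha \in \overline{\mathbb{Q}} : g(\alpha) \in \overline{\mathbb{Q}}\}$. A transcendental entire function is an entire function $\mathbb{C}\to\mathbb{C}$ that is not a polynomial. $f^{(s)}$ denotes the $s$-th derivative of $f$, with $f^{(0)}=f$. *)

theory Defs
  imports "HOL-Analysis.Analysis" "HOL-Computational_Algebra.Polynomial"
begin

definition alg_numbers :: "complex set" where
  "alg_numbers = {z. algebraic z}"

definition exceptional_set :: "(complex \<Rightarrow> complex) \<Rightarrow> complex set" where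
  "exceptional_set g = {\<alpha> \<in> alg_numbers. g \<alpha> \<in> alg_numbers}"

definition transcendental_entire :: "(complex \<Rightarrow> complex) \<Rightarrow> bool" where
  "transcendental_entire f \<longleftrightarrow> f holomorphic_on UNIV \<and> \<not> (\<exists>p. \<forall>z. f z = poly p z)"

end

theory Submission
  imports Defs
begin


lemma funpow_pderiv_Suc: "(pderiv ^^ Suc s) p = (pderiv ^^ s) (pderiv p)"
  by (simp add: funpow_Suc_right del: funpow.simps)

lemma funpow_pderiv_add: "(pderiv ^^ s) (p + q) = (pderiv ^^ s) p + (pderiv ^^ s) q"
  by (induction s) (simp_all add: pderiv_add)

lemma funpow_pderiv_smult: "(pderiv ^^ s) (smult c p) = smult c ((pderiv ^^ s) p)"
  by (induction s) (simp_all add: pderiv_smult)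

lemma dvd_pderiv_pow:
  fixes q p :: "complex poly"
  assumes "q ^ Suc m dvd p" shows "q ^ m dvd pderiv p"
proof -
  obtain r where r: "p = q ^ Suc m * r" using assms by (auto simp: dvd_def)
  have "pderiv p = q ^ m * (smult (of_nat (Suc m)) (pderiv q * r) + q * pderiv r)"
    unfolding r pderiv_mult pderiv_power_Suc by (simp add: algebra_simps)
  then show ?thesis by simp
qed

lemma vanish_lemma:
  fixes p :: "complex poly"
  assumes "[:-a, 1:] ^ m dvd p" "t < m"
  shows "poly ((pderiv ^^ t) p) a = 0"
  using assms
proof (induction t arbitrary: p m)
  case 0
  then obtain m' where "m = Suc m'" by (cases m) auto
  then have "[:-a,1:] dvd p" using 0 by (metis dvd_power dvd_trans zero_less_Suc)
  then show ?case by (simp add: poly_eq_0_iff_dvd)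
next
  case (Suc t)
  then obtain m' where m: "m = Suc m'" by (cases m) auto
  have "[:-a,1:] ^ m' dvd pderiv p" using Suc.prems m dvd_pderiv_pow by blast
  then have "poly ((pderiv ^^ t) (pderiv p)) a = 0" using Suc m by auto
  then show ?case by (simp only: funpow_pderiv_Suc)
qed

lemma lead_lemma:
  fixes r :: "complex poly"
  shows "\<exists>u. (pderiv ^^ s) ([:-a,1:] ^ s * r) = smult (fact s) r + [:-a,1:] * u"
proof (induction s arbitrary: r)
  case 0
  then show ?case by (intro exI[of _ 0]) simp
next
  case (Suc s)
  define q where "q = [:-a,1:]"
  have pq: "pderiv q = 1" by (simp add: q_def pderiv_pCons)
  have e: "pderiv (q ^ Suc s * r) = smult (of_nat (Suc s)) (q ^ s * r) + q ^ s * (q * pderiv r)"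
    unfolding pderiv_mult pderiv_power_Suc pq by (simp add: algebra_simps)
  obtain u1 where u1: "(pderiv ^^ s) (q ^ s * r) = smult (fact s) r + q * u1"
    using Suc q_def by blast
  obtain u2 where u2: "(pderiv ^^ s) (q ^ s * (q * pderiv r)) = smult (fact s) (q * pderiv r) + q * u2"
    using Suc q_def by blast
  have "(pderiv ^^ Suc s) (q ^ Suc s * r) =
     smult (of_nat (Suc s)) (smult (fact s) r + q * u1) + (smult (fact s) (q * pderiv r) + q * u2)"
    by (simp only: funpow_pderiv_Suc e funpow_pderiv_add funpow_pderiv_smult u1 u2)
  also have "\<dots> = smult (fact (Suc s)) r + q * (smult (of_nat (Suc s)) u1 + smult (fact s) (pderiv r) + u2)"
    by (simp add: algebra_simps smult_add_right)
  finally show ?case unfolding q_def by blast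
qed

lemma lead_value:
  fixes r :: "complex poly"
  shows "poly ((pderiv ^^ s) ([:-a,1:] ^ s * r)) a = fact s * poly r a"
  using lead_lemma[of s a r] by auto

lemma deriv_poly_funpow: "(deriv ^^ s) (poly p) = poly ((pderiv ^^ s) (p :: complex poly))"
proof (induction s)
  case 0 then show ?case by simp
next
  case (Suc s)
  have "deriv (poly q) = poly (pderiv q)" for q :: "complex poly"
    by (rule ext) (rule DERIV_imp_deriv, rule poly_DERIV)
  then show ?case using Suc by simp
qed

lemma funpow_pderiv_degree: "degree ((pderiv ^^ s) (p::complex poly)) = degree p - s"
  by (induction s) (simp_all add: degree_pderiv)

lemma funpow_pderiv_zero: "(pderiv ^^ Suc (degree p)) (p :: complex poly) = 0"
proof -
  have "degree ((pderiv ^^ degree p) p) = 0" by (simp add: funpow_pderiv_degree)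
  then show ?thesis by (simp add: pderiv_eq_0_iff)
qed

definition bnd :: "complex poly \<Rightarrow> real \<Rightarrow> real" where
  "bnd p R = (\<Sum>i\<le>degree p. norm (coeff p i) * R ^ i)"

lemma bnd_le: assumes "norm z \<le> R" shows "norm (poly p z) \<le> bnd p R"
proof -
  have "norm (poly p z) \<le> (\<Sum>i\<le>degree p. norm (coeff p i * z ^ i))"
    unfolding poly_altdef by (rule norm_sum)
  also have "\<dots> \<le> bnd p R" unfolding bnd_def
    by (intro sum_mono) (auto simp: norm_mult norm_power intro!: mult_left_mono power_mono assms)
  finally show ?thesis .
qed

lemma bnd_nonneg: "R \<ge> 0 \<Longrightarrow> bnd p R \<ge> 0"
  unfolding bnd_def by (intro sum_nonneg) auto



lemma list_Ints_map: "set xs \<subseteq> \<int> \<Longrightarrow> \<exists>ys. xs = map (of_int :: int \<Rightarrow> complex) ys"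
proof (induction xs)
  case Nil then show ?case by simp
next
  case (Cons x xs)
  then obtain ys where "xs = map of_int ys" by auto
  moreover from Cons obtain n where "x = of_int n" by (auto elim: Ints_cases)
  ultimately show ?case by (intro exI[of _ "n # ys"]) simp
qed

lemma countable_alg: "countable alg_numbers"
proof -
  have "alg_numbers \<subseteq> (\<Union>ys\<in>(UNIV :: int list set). {x. Poly (map (of_int::int\<Rightarrow>complex) ys) \<noteq> 0 \<and> poly (Poly (map (of_int::int\<Rightarrow>complex) ys)) x = 0})"
  proof
    fix x assume "x \<in> alg_numbers"
    then have "algebraic x" by (simp add: alg_numbers_def)
    then obtain p :: "complex poly" where p: "\<And>i. coeff p i \<in> \<int>" "p \<noteq> 0" "poly p x = 0"
      by (erule algebraicE)
    have "set (coeffs p) \<subseteq> \<int>" using p(1) by (auto simp: coeffs_def)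
    then obtain ys where "coeffs p = map of_int ys" using list_Ints_map by blast
    then have "p = Poly (map (of_int::int\<Rightarrow>complex) ys)" by (metis Poly_coeffs)
    then show "x \<in> (\<Union>ys\<in>(UNIV :: int list set). {x. Poly (map (of_int::int\<Rightarrow>complex) ys) \<noteq> 0 \<and> poly (Poly (map (of_int::int\<Rightarrow>complex) ys)) x = 0})"
      using p by auto
  qed
  moreover have "countable (\<Union>ys\<in>(UNIV :: int list set). {x. Poly (map (of_int::int\<Rightarrow>complex) ys) \<noteq> 0 \<and> poly (Poly (map (of_int::int\<Rightarrow>complex) ys)) x = 0})"
  proof (intro countable_UN)
    fix ys :: "int list"
    show "countable {x. Poly (map (of_int :: int \<Rightarrow> complex) ys) \<noteq> 0 \<and> poly (Poly (map (of_int::int\<Rightarrow>complex) ys)) x = 0}"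
    proof (cases "Poly (map (of_int :: int \<Rightarrow> complex) ys) = 0")
      case True then show ?thesis by simp
    next
      case False
      then have "finite {x. poly (Poly (map (of_int :: int \<Rightarrow> complex) ys)) x = 0}"
        by (rule poly_roots_finite)
      then show ?thesis by (auto intro: countable_finite)
    qed
  qed simp
  ultimately show ?thesis by (rule countable_subset)
qed

lemma infinite_alg: "infinite alg_numbers"
proof
  assume "finite alg_numbers"
  moreover have "range (of_nat :: nat \<Rightarrow> complex) \<subseteq> alg_numbers" by (auto simp: alg_numbers_def)
  ultimately have "finite (range (of_nat :: nat \<Rightarrow> complex))" by (rule finite_subset[rotated])
  moreover have "inj (of_nat :: nat \<Rightarrow> complex)" by (auto intro: injI)
  ultimately show False using finite_imageD by blast
qed

lemma gauss_alg:
  assumes "a \<in> \<rat>" "b \<in> \<rat>"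
  shows "algebraic (Complex a b)"
proof -
  define p :: "complex poly" where "p = [:of_real (a^2 + b^2), of_real (-2*a), 1:]"
  have ab: "of_real a \<in> (\<rat> :: complex set)" "of_real b \<in> (\<rat> :: complex set)"
    using assms by (auto elim!: Rats_cases)
  have c: "coeff p i \<in> \<rat>" for i
  proof -
    have "of_real (a^2+b^2) = (of_real a)^2 + (of_real b :: complex)^2" by simp
    moreover have "of_real (-2*a) = -2 * (of_real a :: complex)" by simp
    ultimately show ?thesis using ab unfolding p_def
      by (cases i; cases "i - 1"; simp add: coeff_pCons split: nat.splits)
  qed
  have "p \<noteq> 0" by (simp add: p_def)
  moreover have "poly p (Complex a b) = 0"
    by (simp add: p_def complex_eq_iff power2_eq_square algebra_simps)
  ultimately show ?thesis using c by (intro algebraicI') auto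
qed

lemma alg_dense:
  fixes w :: complex
  assumes "r > 0"
  shows "\<exists>\<beta>. algebraic \<beta> \<and> \<beta> \<noteq> 0 \<and> norm (\<beta> - w) < r"
proof -
  obtain a1 where a1: "a1 \<in> \<rat>" "Re w < a1" "a1 < Re w + r/2"
    using Rats_dense_in_real[of "Re w" "Re w + r/2"] assms by auto
  obtain a2 where a2: "a2 \<in> \<rat>" "a1 < a2" "a2 < Re w + r/2"
    using Rats_dense_in_real[of a1 "Re w + r/2"] a1 by auto
  obtain b where b: "b \<in> \<rat>" "Im w < b" "b < Im w + r/2"
    using Rats_dense_in_real[of "Im w" "Im w + r/2"] assms by auto
  define a where "a = (if a1 = 0 then a2 else a1)"
  have a: "a \<in> \<rat>" "a \<noteq> 0" "Re w < a" "a < Re w + r/2"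
    using a1 a2 by (auto simp: a_def)
  have "norm (Complex a b - w) \<le> \<bar>Re (Complex a b - w)\<bar> + \<bar>Im (Complex a b - w)\<bar>"
    by (rule cmod_le)
  also have "\<dots> < r" using a b by simp
  finally show ?thesis using gauss_alg[OF a(1) b(1)] a(2) by (intro exI[of _ "Complex a b"]) (auto simp: complex_eq_iff)
qed

lemma choose_exists:
  fixes S d :: complex and e :: real
  assumes "e > 0" "d \<noteq> 0"
  shows "\<exists>x. norm x \<le> e \<and> (P \<longrightarrow> algebraic (S + x * d) \<and> S + x * d \<noteq> 0)
               \<and> (\<not> P \<longrightarrow> \<not> algebraic (S + x * d))"
proof (cases P)
  case True
  have "e * norm d > 0" using assms by simp
  then obtain \<beta> where b: "algebraic \<beta>" "\<beta> \<noteq> 0" "norm (\<beta> - S) < e * norm d"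
    using alg_dense by blast
  define x where "x = (\<beta> - S) / d"
  have "S + x * d = \<beta>" using assms by (simp add: x_def)
  moreover have "norm x \<le> e" using b assms by (simp add: x_def norm_divide pos_divide_le_eq)
  ultimately show ?thesis using True b by metis
next
  case False
  have "countable ((\<lambda>\<beta>. (\<beta> - S) / d) ` alg_numbers)" using countable_alg by simp
  moreover have "uncountable (cball (0::complex) e)" using assms by (intro uncountable_cball)
  ultimately obtain x where x: "x \<in> cball 0 e" "x \<notin> (\<lambda>\<beta>. (\<beta> - S) / d) ` alg_numbers"
    by (metis countable_subset subsetI)
  have "\<not> algebraic (S + x * d)"
  proof
    assume "algebraic (S + x * d)"
    then have "(S + x * d - S) / d \<in> (\<lambda>\<beta>. (\<beta> - S) / d) ` alg_numbers"
      by (intro imageI) (auto simp: alg_numbers_def)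
    then show False using x assms by simp
  qed
  then show ?thesis using x False by auto
qed



definition "al = from_nat_into alg_numbers"
definition "pt j = al (snd (prod_decode j))"
definition "od j = fst (prod_decode j)"
definition "PP j = [:- pt j, 1:] ^ od j * (\<Prod>i\<in>{i. i<j \<and> pt i \<noteq> pt j}. [:- pt i, 1:] ^ Suc (od i))"
definition "Bd j = (\<Sum>t\<le>j. bnd ((pderiv^^t) (PP j)) (real j))"
definition "eps j = 1 / (2^j * (1 + Bd j))"
definition "Ssum j pre = (\<Sum>i<j. pre i * poly ((pderiv^^od j) (PP i)) (pt j))"
definition "dd j = poly ((pderiv^^od j) (PP j)) (pt j)"
definition "good A j pre x \<longleftrightarrow> norm x \<le> eps j \<and>
   (pt j \<in> A \<longrightarrow> algebraic (Ssum j pre + x * dd j) \<and> Ssum j pre + x * dd j \<noteq> 0) \<and>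
   (pt j \<notin> A \<longrightarrow> \<not> algebraic (Ssum j pre + x * dd j))"

fun cs :: "complex set \<Rightarrow> nat \<Rightarrow> complex list" where
  "cs A 0 = []"
| "cs A (Suc j) = cs A j @ [SOME x. good A j (\<lambda>i. cs A j ! i) x]"

definition "cc A j = cs A (Suc j) ! j"

lemma length_cs: "length (cs A j) = j"
  by (induction j) auto

lemma cs_map: "cs A j = map (cc A) [0..<j]"
proof (induction j)
  case 0 then show ?case by simp
next
  case (Suc j)
  have "cc A j = (SOME x. good A j (\<lambda>i. cs A j ! i) x)"
    by (simp add: cc_def nth_append length_cs)
  then show ?case using Suc by simp
qed

lemma al_inj: "al a = al b \<longleftrightarrow> a = b"
  unfolding al_def using countable_alg infinite_alg by simp

lemma al_surj: "z \<in> alg_numbers \<Longrightarrow> \<exists>k. al k = z"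
  unfolding al_def using countable_alg by (rule from_nat_into_surj)

lemma triangle_mono: "m \<le> n \<Longrightarrow> triangle m \<le> triangle n"
  by (induction n) (auto simp: le_Suc_eq)

lemma od_less:
  assumes "j < i" "pt j = pt i" shows "od j < od i"
proof (rule ccontr)
  assume "\<not> od j < od i"
  then have le: "od i \<le> od j" by simp
  have k: "snd (prod_decode j) = snd (prod_decode i)" using assms(2) by (simp add: pt_def al_inj)
  have "i = prod_encode (od i, snd (prod_decode i))"
    by (metis od_def prod.collapse prod_decode_inverse)
  also have "\<dots> \<le> prod_encode (od j, snd (prod_decode j))"
    using le k by (simp add: prod_encode_def triangle_mono add_mono)
  also have "\<dots> = j" by (metis od_def prod.collapse prod_decode_inverse)
  finally show False using assms(1) by simp
qed

lemma vanish_later: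
  assumes "j < i" shows "poly ((pderiv^^od j) (PP i)) (pt j) = 0"
proof (cases "pt j = pt i")
  case True
  have "[:- pt i, 1:] ^ od i dvd PP i" by (simp add: PP_def)
  then show ?thesis using True od_less[OF assms True] vanish_lemma by metis
next
  case False
  have "finite {i'. i' < i \<and> pt i' \<noteq> pt i}" by simp
  moreover have "j \<in> {i'. i' < i \<and> pt i' \<noteq> pt i}" using False assms by auto
  ultimately have "[:- pt j, 1:] ^ Suc (od j) dvd (\<Prod>i'\<in>{i'. i' < i \<and> pt i' \<noteq> pt i}. [:- pt i', 1:] ^ Suc (od i'))"
    by (rule dvd_prodI)
  then have "[:- pt j, 1:] ^ Suc (od j) dvd PP i" unfolding PP_def by (rule dvd_mult)
  then show ?thesis using vanish_lemma by blast
qed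

lemma dd_nonzero: "dd j \<noteq> 0"
proof -
  have "dd j = fact (od j) * poly (\<Prod>i\<in>{i. i<j \<and> pt i \<noteq> pt j}. [:- pt i, 1:] ^ Suc (od i)) (pt j)"
    unfolding dd_def PP_def by (rule lead_value)
  also have "\<dots> = fact (od j) * (\<Prod>i\<in>{i. i<j \<and> pt i \<noteq> pt j}. (pt j - pt i) ^ Suc (od i))"
    by (simp add: poly_prod del: power_Suc)
  finally show ?thesis by auto
qed

lemma Bd_nonneg: "Bd j \<ge> 0"
  unfolding Bd_def by (intro sum_nonneg bnd_nonneg) auto

lemma eps_pos: "eps j > 0"
  using Bd_nonneg[of j] by (simp add: eps_def)

lemma cc_good: "good A j (cc A) (cc A j)"
proof -
  have ex: "\<exists>x. good A j (\<lambda>i. cs A j ! i) x"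
    using choose_exists[OF eps_pos[of j] dd_nonzero[of j], where P="pt j \<in> A" and S="Ssum j (\<lambda>i. cs A j ! i)"]
    unfolding good_def by blast
  have e: "cc A j = (SOME x. good A j (\<lambda>i. cs A j ! i) x)"
    by (simp add: cc_def nth_append length_cs)
  have g: "good A j (\<lambda>i. cs A j ! i) (cc A j)" unfolding e by (rule someI_ex[OF ex])
  have "Ssum j (\<lambda>i. cs A j ! i) = Ssum j (cc A)"
    unfolding Ssum_def by (intro sum.cong) (auto simp: cs_map)
  then show ?thesis using g unfolding good_def by simp
qed

definition "FF A s z = (\<Sum>n. cc A n * poly ((pderiv^^s) (PP n)) z)"

lemma FF_value: "FF A (od j) (pt j) = Ssum j (cc A) + cc A j * dd j"
proof -
  have "FF A (od j) (pt j) = (\<Sum>n\<in>{..<Suc j}. cc A n * poly ((pderiv^^od j) (PP n)) (pt j))"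
    unfolding FF_def by (rule suminf_finite) (auto simp: vanish_later)
  then show ?thesis by (simp add: Ssum_def dd_def)
qed

lemma term_bound:
  assumes "s \<le> n" "norm z \<le> real n"
  shows "norm (cc A n * poly ((pderiv^^s) (PP n)) z) \<le> (1/2)^n"
proof -
  have "norm (poly ((pderiv^^s) (PP n)) z) \<le> bnd ((pderiv^^s) (PP n)) (real n)"
    by (rule bnd_le[OF assms(2)])
  also have "\<dots> \<le> Bd n" unfolding Bd_def
    by (rule member_le_sum[where f = "\<lambda>t. bnd ((pderiv^^t) (PP n)) (real n)"]) (use assms in \<open>auto intro: bnd_nonneg\<close>)
  finally have p: "norm (poly ((pderiv^^s) (PP n)) z) \<le> Bd n" .
  have c: "norm (cc A n) \<le> eps n" using cc_good[of A n] by (simp add: good_def)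
  have "norm (cc A n * poly ((pderiv^^s) (PP n)) z) \<le> eps n * Bd n"
    unfolding norm_mult using p c by (intro mult_mono) (auto simp: Bd_nonneg less_imp_le[OF eps_pos])
  also have "\<dots> = (1/2)^n * (Bd n / (1 + Bd n))" by (simp add: eps_def power_divide)
  also have "\<dots> \<le> (1/2)^n * 1"
    using Bd_nonneg[of n] by (intro mult_left_mono) auto
  also have "\<dots> = (1/2)^n" by simp
  finally show ?thesis .
qed



lemma FF_summable: "summable (\<lambda>n. cc A n * poly ((pderiv^^s)(PP n)) z)"
proof (rule summable_comparison_test')
  show "summable (\<lambda>n. (1/2::real)^n)" by (rule summable_geometric) simp
  fix n assume "max s (nat \<lceil>norm z\<rceil>) \<le> n"
  then have "s \<le> n" "norm z \<le> real n" by linarith+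
  then show "norm (cc A n * poly ((pderiv^^s)(PP n)) z) \<le> (1/2)^n" by (rule term_bound)
qed

lemma FF_deriv: "(FF A s has_field_derivative FF A (Suc s) z) (at z)"
proof -
  define R where "R = norm z + 1"
  define S where "S = ball (0::complex) R"
  define f where "f = (\<lambda>n w. cc A n * poly ((pderiv^^s)(PP n)) w)"
  define f' where "f' = (\<lambda>n w. cc A n * poly ((pderiv^^Suc s)(PP n)) w)"
  have zS: "z \<in> S" "open S" by (auto simp: S_def R_def)
  have df: "(f n has_field_derivative f' n x) (at x within S)" for n x
    unfolding f_def f'_def
    by (rule DERIV_cmult, rule has_field_derivative_at_within) (simp add: poly_DERIV)
  have ul: "uniform_limit S (\<lambda>n x. \<Sum>i<n. f' i x) (\<lambda>x. suminf (\<lambda>i. f' i x)) sequentially"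
  proof (rule Weierstrass_m_test_ev)
    show "summable (\<lambda>n. (1/2::real)^n)" by (rule summable_geometric) simp
    show "\<forall>\<^sub>F n in sequentially. \<forall>x\<in>S. norm (f' n x) \<le> (1/2)^n"
      unfolding eventually_sequentially
    proof (intro exI allI impI ballI)
      fix n x assume n: "max (Suc s) (nat \<lceil>R\<rceil>) \<le> n" and x: "x \<in> S"
      have "norm x \<le> R" using x by (simp add: S_def)
      then have "Suc s \<le> n" "norm x \<le> real n" using n by linarith+
      then show "norm (f' n x) \<le> (1/2)^n" unfolding f'_def by (rule term_bound)
    qed
  qed
  have conv: "\<exists>N. \<forall>n x. n \<ge> N \<longrightarrow> x \<in> S \<longrightarrow> cmod ((\<Sum>i<n. f' i x) - FF A (Suc s) x) \<le> e"
    if e: "e > 0" for e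
  proof -
    have "\<forall>\<^sub>F n in sequentially. \<forall>x\<in>S. dist (\<Sum>i<n. f' i x) (suminf (\<lambda>i. f' i x)) < e"
      by (rule uniform_limitD[OF ul e])
    then obtain N where "\<forall>n\<ge>N. \<forall>x\<in>S. dist (\<Sum>i<n. f' i x) (suminf (\<lambda>i. f' i x)) < e"
      unfolding eventually_sequentially by blast
    then show ?thesis unfolding FF_def f'_def dist_norm by (intro exI[of _ N]) (auto intro: less_imp_le)
  qed
  have ex: "\<exists>x l. x \<in> S \<and> ((\<lambda>n. f n x) sums l)"
    using zS FF_summable[of A s z] unfolding f_def by (blast intro: summable_sums)
  obtain g where g: "\<forall>x \<in> S. ((\<lambda>n. f n x) sums g x) \<and> ((g has_field_derivative FF A (Suc s) x) (at x within S))"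
    using has_complex_derivative_series[OF _ df conv ex] by (auto simp: S_def)
  have gz: "(g has_field_derivative FF A (Suc s) z) (at z)"
    using g zS at_within_open[OF zS] by metis
  show ?thesis
  proof (rule has_field_derivative_transform_within_open[OF gz zS(2) zS(1)])
    fix x assume "x \<in> S"
    then have "(\<lambda>n. f n x) sums g x" using g by blast
    then show "g x = FF A s x" unfolding FF_def f_def by (simp add: sums_iff)
  qed
qed

lemma FF_funpow: "(deriv ^^ s) (FF A 0) = FF A s"
proof (induction s)
  case 0 then show ?case by simp
next
  case (Suc s)
  have "deriv (FF A s) = FF A (Suc s)"
    by (rule ext, rule DERIV_imp_deriv, rule FF_deriv)
  then show ?case using Suc by simp
qed

lemma FF_holo: "FF A 0 holomorphic_on UNIV"
  unfolding holomorphic_on_def field_differentiable_def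
  using FF_deriv[of A 0] by (blast intro: has_field_derivative_at_within)



lemma pt_od_exists: "z \<in> alg_numbers \<Longrightarrow> \<exists>j. pt j = z \<and> od j = s"
proof -
  assume "z \<in> alg_numbers"
  then obtain k where k: "al k = z" using al_surj by blast
  show ?thesis
    by (intro exI[of _ "prod_encode (s, k)"]) (simp add: pt_def od_def k)
qed

lemma FF_val:
  assumes "z \<in> alg_numbers"
  shows "(z \<in> A \<longrightarrow> algebraic (FF A s z) \<and> FF A s z \<noteq> 0) \<and> (z \<notin> A \<longrightarrow> \<not> algebraic (FF A s z))"
proof -
  obtain j where j: "pt j = z" "od j = s" using pt_od_exists[OF assms] by blast
  have "FF A s z = Ssum j (cc A) + cc A j * dd j" using FF_value[of A j] j by simp
  then show ?thesis using cc_good[of A j] j unfolding good_def by simp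
qed

theorem theorem2:
  assumes "A \<subseteq> alg_numbers"
  shows "\<exists>f. transcendental_entire f \<and>
           (\<forall>s::nat. exceptional_set ((deriv ^^ s) f) = A)"
proof (intro exI conjI allI)
  show "exceptional_set ((deriv ^^ s) (FF A 0)) = A" for s
    unfolding FF_funpow exceptional_set_def
    using assms FF_val[of _ A s] by (auto simp: alg_numbers_def)
  show "transcendental_entire (FF A 0)"
    unfolding transcendental_entire_def
  proof (intro conjI FF_holo notI)
    assume "\<exists>p. \<forall>z. FF A 0 z = poly p z"
    then obtain p where "FF A 0 = poly p" by blast
    then have "FF A (Suc (degree p)) = poly 0"
      using FF_funpow[of "Suc (degree p)" A] deriv_poly_funpow[of "Suc (degree p)" p]
      by (simp only: funpow_pderiv_zero)
    then have z: "FF A (Suc (degree p)) 0 = 0" by simp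
    have "(0::complex) \<in> alg_numbers" by (simp add: alg_numbers_def)
    from FF_val[OF this, of A "Suc (degree p)"] z show False by auto
  qed
qed


end
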